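(* There exist constants $C,\epsilon_0>0$ such that for all $L\in\mathbb N^{2}$ and $\eta>0$ with $\eta\,\mathrm{vol}\Lambda_{L}\le\epsilon_0$, all $v\in(2\mathbb Z)^{2}$ and all $z\in\mathbb C\setminus\mathbb T$, \[\mathbb P\Big(\mathrm{dist}\big(z,\sigma(U^{\Lambda_{L}+v}_{\omega}(0))\big)\le\eta\Big)\le C\,\eta\,\mathrm{vol}\Lambda_{L}.\]
   Context: Let $\{e_{\mu}\}_{\mu\in\mathbb Z^{2}}$ be the standard basis of $\ell^{2}(\mathbb Z^{2})$ and $\mathbb T=\{z\in\mathbb C:|z|=1\}$. Let $\Omega=\mathbb T^{\mathbb Z^{2}}$ with the product $\sigma$-algebra and probability $\mathbb P=\bigotimes_{\mu\in\mathbb Z^{2}}d\ell$, $d\ell$ normalized Lebesgue measure on $\mathbb T$. $D_{\omega}e_{\mu}=\omega_{\mu}e_{\mu}$. For $j,k\in\mathbb Z$ let $\mathcal H^{j,k}=\mathrm{span}\{e_{(2j,2k)},e_{(2j+1,2k)},e_{(2j+1,2k+1)},e_{(2j,2k+1)}\}$ and let $S_{\circlearrowleft}$ be the unitary acting on each $\mathcal H^{j,k}$ by the cyclic permutation $e_{(2j,2k)}\mapsto e_{(2j+1,2k)}\mapsto e_{(2j+1,2k+1)}\mapsto e_{(2j,2k+1)}\mapsto e_{(2j,2k)}$. For $L=(L_1,L_2)\in\mathbb N^{2}$ (positive integers) let $\Lambda_{L}=\mathbb Z^{2}\cap([-2L_{1},2L_{1}-1]\times[-2L_{2}+2,2L_{2}+1])$,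 $\mathrm{vol}\Lambda_L=4L_1L_2$, and for $v\in(2\mathbb Z)^2$ let $\Lambda_L+v$ be the translated box. Then $\ell^2(\Lambda_L+v)$ is the direct sum of $4L_1L_2$ of the blocks $\mathcal H^{j,k}$, and $U^{\Lambda_{L}+v}_{\omega}(0)$ denotes the restriction of $D_{\omega}S_{\circlearrowleft}$ to the invariant subspace $\ell^{2}(\Lambda_{L}+v)$. $\sigma(\cdot)$ denotes the spectrum. *)

theory Defs
  imports "HOL-Probability.Probability"
begin

(* Normalized Lebesgue (Haar) measure on the unit circle T, as the image of the
   uniform distribution on [0, 2 pi) under t |-> e^{i t}. *)
definition circle_measure :: "complex measure" where
  "circle_measure = distr (uniform_measure lborel {0..<2*pi}) borel cis"

definition Omega :: "(int \<times> int \<Rightarrow> complex) measure" where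
  "Omega = PiM UNIV (\<lambda>_. circle_measure)"

(* The cyclic permutation on each block H^{j,k}:
   (2j,2k) -> (2j+1,2k) -> (2j+1,2k+1) -> (2j,2k+1) -> (2j,2k). *)
definition cyc :: "int \<times> int \<Rightarrow> int \<times> int" where
  "cyc \<mu> = (case \<mu> of (a, b) \<Rightarrow>
      if even a \<and> even b then (a + 1, b)
      else if odd a \<and> even b then (a, b + 1)
      else if odd a \<and> odd b then (a - 1, b)
      else (a, b - 1))"

(* Matrix entries <e_mu, D_omega S e_nu> of D_omega S_circlearrowleft,
   where S e_nu = e_{cyc nu} and D_omega e_mu = omega_mu e_mu. *)
definition DS_entry :: "(int \<times> int \<Rightarrow> complex) \<Rightarrow> int \<times> int \<Rightarrow> int \<times> int \<Rightarrow> complex" where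
  "DS_entry \<omega> \<mu> \<nu> = (if \<mu> = cyc \<nu> then \<omega> \<mu> else 0)"

definition box :: "nat \<Rightarrow> nat \<Rightarrow> (int \<times> int) set" where
  "box L1 L2 = {(a, b). - 2 * int L1 \<le> a \<and> a \<le> 2 * int L1 - 1
                      \<and> - 2 * int L2 + 2 \<le> b \<and> b \<le> 2 * int L2 + 1}"

definition translate :: "(int \<times> int) set \<Rightarrow> int \<times> int \<Rightarrow> (int \<times> int) set" where
  "translate \<Lambda> v = (\<lambda>\<mu>. \<mu> + v) ` \<Lambda>"

definition vol_box :: "nat \<Rightarrow> nat \<Rightarrow> real" where
  "vol_box L1 L2 = 4 * real L1 * real L2"

(* Spectrum of the restriction of D_omega S to the finite-dimensional invariant
   subspace l^2(Lambda): the set of its eigenvalues. *)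
definition restricted_spectrum ::
    "(int \<times> int \<Rightarrow> complex) \<Rightarrow> (int \<times> int) set \<Rightarrow> complex set" where
  "restricted_spectrum \<omega> \<Lambda> =
     {e. \<exists>x :: int \<times> int \<Rightarrow> complex.
            (\<forall>\<mu>. \<mu> \<notin> \<Lambda> \<longrightarrow> x \<mu> = 0) \<and> (\<exists>\<mu>\<in>\<Lambda>. x \<mu> \<noteq> 0) \<and>
            (\<forall>\<mu>\<in>\<Lambda>. (\<Sum>\<nu>\<in>\<Lambda>. DS_entry \<omega> \<mu> \<nu> * x \<nu>) = e * x \<mu>)}"

end

theory Submission
  imports Defs
begin


lemma sin_ge_half: fixes s :: real assumes "0 \<le> s" "s \<le> pi/2" shows "s/2 \<le> sin s"
proof (cases "s \<le> pi/3")
  case True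
  let ?f = "\<lambda>x. sin x - x/2"
  have d: "\<And>u. \<lbrakk>0 \<le> u; u \<le> s\<rbrakk> \<Longrightarrow> (?f has_real_derivative cos u - 1/2) (at u)"
    by (auto intro!: derivative_eq_intros)
  have "\<And>u. \<lbrakk>0 \<le> u; u \<le> s\<rbrakk> \<Longrightarrow> cos u - 1/2 \<ge> 0"
  proof -
    fix u assume u: "0 \<le> u" "u \<le> s"
    have "cos (pi/3) \<le> cos u" using u True by (intro cos_monotone_0_pi_le) auto
    then show "cos u - 1/2 \<ge> 0" by (simp add: cos_60)
  qed
  then have "?f s \<ge> ?f 0"
    using DERIV_nonneg_imp_nondecreasing[OF assms(1), of ?f] d by blast
  then show ?thesis by simp
next
  case False
  have "sin (pi/3) \<le> sin s" using False assms by (intro sin_monotone_2pi_le) auto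
  moreover have "sin (pi/3) = sqrt 3 / 2" by (simp add: sin_60)
  moreover have "sqrt 3 \<ge> 1.7" by (rule real_le_rsqrt) (simp add: power2_eq_square)
  moreover have "pi \<le> 3.2" using pi_less_4 pi_approx by simp
  ultimately show ?thesis using assms by simp
qed

lemma cmod_cis_minus_1: "cmod (cis u - 1) = 2 * \<bar>sin (u/2)\<bar>"
proof -
  have "(cmod (cis u - 1))^2 = (cos u - 1)^2 + (sin u)^2"
    by (simp add: cmod_power2)
  also have "\<dots> = 2 - 2 * cos u" using sin_cos_squared_add[of u] by (simp add: power2_eq_square algebra_simps)
  also have "cos u = 1 - 2 * (sin (u/2))^2" using cos_double_sin[of "u/2"] by simp
  finally have "(cmod (cis u - 1))^2 = (2 * \<bar>sin (u/2)\<bar>)^2" by (simp add: power2_eq_square)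
  then have "(cmod (cis u - 1))^2 = (2 * \<bar>sin (u/2)\<bar>)^2" by (simp add: power_mult_distrib)
  then show ?thesis by (subst (asm) power2_eq_iff_nonneg) auto
qed

lemma angle_bound: assumes "-pi \<le> u" "u \<le> pi" shows "\<bar>u\<bar> \<le> 2 * cmod (cis u - 1)"
proof -
  have "\<bar>u/2\<bar>/2 \<le> \<bar>sin (u/2)\<bar>"
  proof (cases "u \<ge> 0")
    case True then show ?thesis using sin_ge_half[of "u/2"] assms by auto
  next
    case False then show ?thesis using sin_ge_half[of "-u/2"] assms by auto
  qed
  then show ?thesis by (simp add: cmod_cis_minus_1)
qed



lemma cis_meas[measurable]: "cis \<in> borel_measurable borel"
  by (intro borel_measurable_continuous_onI continuous_intros)

lemma sets_circle[simp, measurable_cong]: "sets circle_measure = sets borel"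
  by (simp add: circle_measure_def)

lemma space_circle[simp]: "space circle_measure = UNIV"
  by (simp add: circle_measure_def)

lemma prob_circle: "prob_space circle_measure"
  unfolding circle_measure_def
  by (intro prob_space.prob_space_distr prob_space_uniform_measure) auto

lemma AE_circle: "AE y in circle_measure. cmod y = 1"
  unfolding circle_measure_def
  by (subst AE_distr_iff) auto

lemma circle_ball:
  fixes w :: complex and \<delta> :: real
  assumes w: "cmod w = 1" and d: "0 \<le> \<delta>"
  shows "emeasure circle_measure (cball w \<delta>) \<le> ennreal (2 * \<delta>)"
proof -
  define a :: real where "a = Arg w"
  have w0: "w \<noteq> 0" using w by auto
  have wa: "w = cis a" using Arg_correct[OF w0] w by (simp add: a_def sgn_div_norm)
  have ab: "-pi < a" "a \<le> pi" using Arg_correct[OF w0] by (auto simp: a_def)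
  let ?S = "{0..<2*pi} \<inter> cis -` cball w \<delta>"
  have sub: "?S \<subseteq> {a - 2*\<delta> .. a + 2*\<delta>} \<union> {a + 2*pi - 2*\<delta> .. a + 2*pi + 2*\<delta>}"
  proof
    fix t assume t: "t \<in> ?S"
    have "cis t - cis a = cis a * (cis (t - a) - 1)"
      by (simp add: algebra_simps cis_mult)
    then have eq: "cmod (cis t - w) = cmod (cis (t - a) - 1)"
      by (simp add: wa norm_mult)
    have le: "cmod (cis (t - a) - 1) \<le> \<delta>" using t eq by (simp add: dist_norm norm_minus_commute)
    show "t \<in> {a - 2*\<delta> .. a + 2*\<delta>} \<union> {a + 2*pi - 2*\<delta> .. a + 2*pi + 2*\<delta>}"
    proof (cases "t - a \<le> pi")
      case True
      then have "\<bar>t - a\<bar> \<le> 2 * cmod (cis (t - a) - 1)" using t ab by (intro angle_bound) auto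
      then show ?thesis using le by auto
    next
      case False
      have c: "cis (t - a - 2*pi) = cis (t - a)" by (simp add: cis.ctr cos_diff sin_diff)
      have "\<bar>t - a - 2*pi\<bar> \<le> 2 * cmod (cis (t - a - 2*pi) - 1)" using t ab False by (intro angle_bound) auto
      then show ?thesis using le c by auto
    qed
  qed
  have "cis -` cball w \<delta> \<inter> space borel \<in> sets borel"
    by (rule measurable_sets[OF cis_meas]) simp
  then have Sm: "cis -` cball w \<delta> \<in> sets borel" by simp
  have "emeasure circle_measure (cball w \<delta>) = emeasure (uniform_measure lborel {0..<2*pi}) (cis -` cball w \<delta>)"
    unfolding circle_measure_def by (subst emeasure_distr) auto
  also have "\<dots> = emeasure lborel ?S / emeasure lborel {0..<2*pi}"
    using Sm by (subst emeasure_uniform_measure) (auto simp: Int_commute)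
  also have "\<dots> \<le> (emeasure lborel {a - 2*\<delta> .. a + 2*\<delta>} + emeasure lborel {a + 2*pi - 2*\<delta> .. a + 2*pi + 2*\<delta>}) / ennreal (2*pi)"
    apply (subst emeasure_lborel_Ico, simp, simp only: diff_zero)
    apply (rule divide_right_mono_ennreal)
    apply (rule order_trans[OF emeasure_mono[OF sub]], simp)
    apply (rule emeasure_subadditive) apply auto done
  also have "\<dots> = ennreal (8 * \<delta> / (2*pi))"
    using d by (simp add: ennreal_plus[symmetric] divide_ennreal del: ennreal_plus)
  also have "\<dots> \<le> ennreal (2 * \<delta>)"
    proof (intro ennreal_leI)
    have "\<delta> * 2 \<le> pi * \<delta>" using mult_right_mono[of 2 pi \<delta>] d pi_gt3 by (simp add: mult.commute)
    then show "8 * \<delta> / (2 * pi) \<le> 2 * \<delta>" using pi_gt3 by (simp add: field_simps)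
  qed
  finally show ?thesis .
qed



definition cyc3 :: "int \<times> int \<Rightarrow> int \<times> int" where "cyc3 \<mu> = cyc (cyc (cyc \<mu>))"

definition Pb :: "(int \<times> int \<Rightarrow> complex) \<Rightarrow> int \<times> int \<Rightarrow> complex" where
  "Pb \<omega> \<mu> = \<omega> \<mu> * \<omega> (cyc \<mu>) * \<omega> (cyc (cyc \<mu>)) * \<omega> (cyc3 \<mu>)"

lemma cyc_ee: "even a \<Longrightarrow> even b \<Longrightarrow> cyc (a,b) = (a+1,b)"
  and cyc_oe: "odd a \<Longrightarrow> even b \<Longrightarrow> cyc (a,b) = (a,b+1)"
  and cyc_oo: "odd a \<Longrightarrow> odd b \<Longrightarrow> cyc (a,b) = (a-1,b)"
  and cyc_eo: "even a \<Longrightarrow> odd b \<Longrightarrow> cyc (a,b) = (a,b-1)"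
  by (simp_all add: cyc_def)

lemma cyc4: "cyc (cyc (cyc (cyc \<mu>))) = \<mu>"
proof -
  obtain a b where m: "\<mu> = (a,b)" by (cases \<mu>)
  consider "even a" "even b" | "odd a" "even b" | "odd a" "odd b" | "even a" "odd b" by blast
  then show ?thesis unfolding m
    by cases (simp_all add: cyc_ee cyc_oe cyc_oo cyc_eo)
qed

lemma cyc_cyc3: "cyc (cyc3 \<mu>) = \<mu>" and cyc3_cyc: "cyc3 (cyc \<mu>) = \<mu>"
  by (simp_all add: cyc3_def cyc4)

lemma cyc_eq_iff: "\<mu> = cyc \<nu> \<longleftrightarrow> \<nu> = cyc3 \<mu>"
  using cyc_cyc3 cyc3_cyc by metis

lemma cyc3_inj: "cyc3 \<mu> = cyc3 \<nu> \<longleftrightarrow> \<mu> = \<nu>"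
  by (metis cyc_cyc3)

lemma cyc_neq: "cyc \<mu> \<noteq> \<mu> \<and> cyc (cyc \<mu>) \<noteq> \<mu> \<and> cyc3 \<mu> \<noteq> \<mu>"
proof -
  obtain a b where m: "\<mu> = (a,b)" by (cases \<mu>)
  consider "even a" "even b" | "odd a" "even b" | "odd a" "odd b" | "even a" "odd b" by blast
  then show ?thesis unfolding m cyc3_def
    by cases (simp_all add: cyc_ee cyc_oe cyc_oo cyc_eo)
qed

lemma sum_DS:
  assumes fin: "finite \<Lambda>" and cl: "\<forall>\<mu>\<in>\<Lambda>. cyc \<mu> \<in> \<Lambda>" and mu: "\<mu> \<in> \<Lambda>"
  shows "(\<Sum>\<nu>\<in>\<Lambda>. DS_entry \<omega> \<mu> \<nu> * x \<nu>) = \<omega> \<mu> * x (cyc3 \<mu>)"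
proof -
  have c3: "cyc3 \<mu> \<in> \<Lambda>" using cl mu by (simp add: cyc3_def)
  have "(\<Sum>\<nu>\<in>\<Lambda>. DS_entry \<omega> \<mu> \<nu> * x \<nu>) = (\<Sum>\<nu>\<in>\<Lambda>. if \<nu> = cyc3 \<mu> then \<omega> \<mu> * x \<nu> else 0)"
    by (intro sum.cong) (auto simp: DS_entry_def cyc_eq_iff)
  also have "\<dots> = \<omega> \<mu> * x (cyc3 \<mu>)" using fin c3 by simp
  finally show ?thesis .
qed

lemma spec_char:
  assumes fin: "finite \<Lambda>" and cl: "\<forall>\<mu>\<in>\<Lambda>. cyc \<mu> \<in> \<Lambda>"
  shows "restricted_spectrum \<omega> \<Lambda> = {e. \<exists>\<mu>\<in>\<Lambda>. e ^ 4 = Pb \<omega> \<mu>}"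
proof (intro set_eqI iffI)
  fix e assume "e \<in> restricted_spectrum \<omega> \<Lambda>"
  then obtain x \<mu> where sup: "\<forall>\<mu>. \<mu> \<notin> \<Lambda> \<longrightarrow> x \<mu> = 0" and mu: "\<mu> \<in> \<Lambda>" "x \<mu> \<noteq> 0"
    and eq: "\<forall>\<mu>\<in>\<Lambda>. (\<Sum>\<nu>\<in>\<Lambda>. DS_entry \<omega> \<mu> \<nu> * x \<nu>) = e * x \<mu>"
    unfolding restricted_spectrum_def by blast
  have eq': "\<omega> \<nu> * x (cyc3 \<nu>) = e * x \<nu>" if "\<nu> \<in> \<Lambda>" for \<nu>
  proof -
    have "(\<Sum>\<nu>'\<in>\<Lambda>. DS_entry \<omega> \<nu> \<nu>' * x \<nu>') = e * x \<nu>" using eq that by blast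
    moreover have "(\<Sum>\<nu>'\<in>\<Lambda>. DS_entry \<omega> \<nu> \<nu>' * x \<nu>') = \<omega> \<nu> * x (cyc3 \<nu>)"
      by (rule sum_DS[OF fin cl that])
    ultimately show ?thesis by simp
  qed
  have m1: "cyc3 \<mu> \<in> \<Lambda>" and m2: "cyc (cyc \<mu>) \<in> \<Lambda>" and m3: "cyc \<mu> \<in> \<Lambda>"
    using cl mu by (auto simp: cyc3_def)
  have a: "cyc3 (cyc3 \<mu>) = cyc (cyc \<mu>)" "cyc3 (cyc (cyc \<mu>)) = cyc \<mu>" "cyc3 (cyc \<mu>) = \<mu>"
    by (simp_all add: cyc3_def cyc4)
  have "e^4 * x \<mu> = e^3 * (\<omega> \<mu> * x (cyc3 \<mu>))" using eq'[OF mu(1)] by (simp add: eval_nat_numeral)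
  also have "\<dots> = e^2 * \<omega> \<mu> * (\<omega> (cyc3 \<mu>) * x (cyc (cyc \<mu>)))"
    using eq'[OF m1] a by (simp add: eval_nat_numeral algebra_simps)
  also have "\<dots> = e * \<omega> \<mu> * \<omega> (cyc3 \<mu>) * (\<omega> (cyc (cyc \<mu>)) * x (cyc \<mu>))"
    using eq'[OF m2] a by (simp add: eval_nat_numeral algebra_simps)
  also have "\<dots> = \<omega> \<mu> * \<omega> (cyc3 \<mu>) * \<omega> (cyc (cyc \<mu>)) * (\<omega> (cyc \<mu>) * x \<mu>)"
    using eq'[OF m3] a by (simp add: eval_nat_numeral algebra_simps)
  also have "\<dots> = Pb \<omega> \<mu> * x \<mu>" by (simp add: Pb_def algebra_simps)
  finally have "e^4 = Pb \<omega> \<mu>" using mu(2) by simp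
  then show "e \<in> {e. \<exists>\<mu>\<in>\<Lambda>. e ^ 4 = Pb \<omega> \<mu>}" using mu by blast
next
  fix e assume "e \<in> {e. \<exists>\<mu>\<in>\<Lambda>. e ^ 4 = Pb \<omega> \<mu>}"
  then obtain \<mu> where mu: "\<mu> \<in> \<Lambda>" and e4: "e^4 = Pb \<omega> \<mu>" by blast
  have m1: "cyc3 \<mu> \<in> \<Lambda>" and m2: "cyc (cyc \<mu>) \<in> \<Lambda>" and m3: "cyc \<mu> \<in> \<Lambda>"
    using cl mu by (auto simp: cyc3_def)
  have sumeq: "(\<Sum>\<nu>\<in>\<Lambda>. DS_entry \<omega> \<nu>' \<nu> * x \<nu>) = \<omega> \<nu>' * x (cyc3 \<nu>')" if "\<nu>' \<in> \<Lambda>" for \<nu>' x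
    using sum_DS[OF fin cl that] .
  show "e \<in> restricted_spectrum \<omega> \<Lambda>"
  proof (cases "e = 0")
    case True
    then have "Pb \<omega> \<mu> = 0" using e4 by simp
    then have "\<exists>\<nu>0\<in>\<Lambda>. \<omega> \<nu>0 = 0"
      using mu m1 m2 m3 unfolding Pb_def by (metis mult_eq_0_iff)
    then obtain \<nu>0 where n0: "\<nu>0 \<in> \<Lambda>" "\<omega> \<nu>0 = 0" by blast
    define x where "x = (\<lambda>\<nu>. if \<nu> = cyc3 \<nu>0 then (1::complex) else 0)"
    have c: "cyc3 \<nu>0 \<in> \<Lambda>" using cl n0 by (simp add: cyc3_def)
    show ?thesis unfolding restricted_spectrum_def
      apply (rule CollectI, rule exI[of _ x])
      using c n0 by (auto simp: sumeq x_def cyc3_inj True)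
  next
    case False
    define c1 c2 c3 where "c1 = cyc \<mu>" "c2 = cyc (cyc \<mu>)" "c3 = cyc3 \<mu>"
    have d: "c1 \<noteq> \<mu>" "c2 \<noteq> \<mu>" "c3 \<noteq> \<mu>" "c1 \<noteq> c2" "c1 \<noteq> c3" "c2 \<noteq> c3"
      unfolding c1_c2_c3_def using cyc_neq[of \<mu>] cyc_neq[of "cyc \<mu>"] cyc_neq[of "cyc (cyc \<mu>)"]
      by (auto simp: cyc3_def cyc4)
    have cc: "cyc3 \<mu> = c3" "cyc3 c1 = \<mu>" "cyc3 c2 = c1" "cyc3 c3 = c2"
      unfolding c1_c2_c3_def by (simp_all add: cyc3_def cyc4)
    define x where "x = (\<lambda>\<nu>. if \<nu> = \<mu> then (1::complex)
        else if \<nu> = c1 then \<omega> c1 / e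
        else if \<nu> = c2 then \<omega> c2 * \<omega> c1 / e^2
        else if \<nu> = c3 then \<omega> c3 * \<omega> c2 * \<omega> c1 / e^3 else 0)"
    have P: "\<omega> \<mu> * \<omega> c1 * \<omega> c2 * \<omega> c3 = e^4" using e4 by (simp add: Pb_def c1_c2_c3_def)
    have inS: "c1 \<in> \<Lambda>" "c2 \<in> \<Lambda>" "c3 \<in> \<Lambda>" using m1 m2 m3 by (simp_all add: c1_c2_c3_def)
    have ev: "\<omega> \<nu> * x (cyc3 \<nu>) = e * x \<nu>" for \<nu>
    proof -
      consider "\<nu> = \<mu>" | "\<nu> = c1" | "\<nu> = c2" | "\<nu> = c3" | "\<nu> \<notin> {\<mu>, c1, c2, c3}" by blast
      then show ?thesis
      proof cases
        case 1 then show ?thesis using d cc False P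
          by (simp add: x_def field_simps eval_nat_numeral)
      next
        case 2 then show ?thesis using d cc False by (simp add: x_def field_simps eval_nat_numeral)
      next
        case 3 then show ?thesis using d cc False by (simp add: x_def field_simps eval_nat_numeral)
      next
        case 4 then show ?thesis using d cc False by (simp add: x_def field_simps eval_nat_numeral)
      next
        case 5
        have "cyc3 \<nu> \<notin> {\<mu>, c1, c2, c3}"
          using 5 cc cyc3_inj[of \<nu> c1] cyc3_inj[of \<nu> c2] cyc3_inj[of \<nu> c3] cyc3_inj[of \<nu> \<mu>]
          by auto
        then show ?thesis using 5 by (auto simp: x_def)
      qed
    qed
    show ?thesis unfolding restricted_spectrum_def
      apply (rule CollectI, rule exI[of _ x])
      apply (intro conjI)
      subgoal using mu inS by (auto simp: x_def)
      subgoal using mu by (intro bexI[of _ \<mu>]) (simp_all add: x_def)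
      subgoal using ev by (simp add: sumeq)
      done
  qed
qed



lemma mem_tbox: "\<mu> \<in> translate (box L1 L2) v \<longleftrightarrow>
   - 2 * int L1 + fst v \<le> fst \<mu> \<and> fst \<mu> \<le> 2 * int L1 - 1 + fst v \<and>
   - 2 * int L2 + 2 + snd v \<le> snd \<mu> \<and> snd \<mu> \<le> 2 * int L2 + 1 + snd v"
proof
  assume "\<mu> \<in> translate (box L1 L2) v"
  then obtain a b where "(a,b) \<in> box L1 L2" "\<mu> = (a,b) + v" by (auto simp: translate_def)
  then show "- 2 * int L1 + fst v \<le> fst \<mu> \<and> fst \<mu> \<le> 2 * int L1 - 1 + fst v \<and>
   - 2 * int L2 + 2 + snd v \<le> snd \<mu> \<and> snd \<mu> \<le> 2 * int L2 + 1 + snd v"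
    by (auto simp: box_def)
next
  assume h: "- 2 * int L1 + fst v \<le> fst \<mu> \<and> fst \<mu> \<le> 2 * int L1 - 1 + fst v \<and>
   - 2 * int L2 + 2 + snd v \<le> snd \<mu> \<and> snd \<mu> \<le> 2 * int L2 + 1 + snd v"
  have "\<mu> = (fst \<mu> - fst v, snd \<mu> - snd v) + v" by (simp add: prod_eq_iff)
  moreover have "(fst \<mu> - fst v, snd \<mu> - snd v) \<in> box L1 L2" using h by (auto simp: box_def)
  ultimately show "\<mu> \<in> translate (box L1 L2) v" unfolding translate_def by blast
qed

lemma cyc_tbox:
  assumes ev: "even (fst v)" "even (snd v)" and m: "\<mu> \<in> translate (box L1 L2) v"
  shows "cyc \<mu> \<in> translate (box L1 L2) v"
proof -
  obtain a b where ab: "\<mu> = (a,b)" by (cases \<mu>)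
  obtain p q where pq: "v = (2*p, 2*q)" using ev by (cases v) (auto elim!: evenE)
  have h: "- 2 * int L1 + 2*p \<le> a" "a \<le> 2 * int L1 - 1 + 2*p"
      "- 2 * int L2 + 2 + 2*q \<le> b" "b \<le> 2 * int L2 + 1 + 2*q"
    using m by (auto simp: mem_tbox ab pq)
  consider "even a" "even b" | "odd a" "even b" | "odd a" "odd b" | "even a" "odd b" by blast
  then show ?thesis
  proof cases
    case 1
    have "a \<noteq> 2 * int L1 - 1 + 2*p" using 1 by presburger
    then show ?thesis using h 1 by (simp add: mem_tbox ab pq cyc_ee)
  next
    case 2
    have "b \<noteq> 2 * int L2 + 1 + 2*q" using 2 by presburger
    then show ?thesis using h 2 by (simp add: mem_tbox ab pq cyc_oe)
  next
    case 3
    have "a \<noteq> - 2 * int L1 + 2*p" using 3 by presburger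
    then show ?thesis using h 3 by (simp add: mem_tbox ab pq cyc_oo)
  next
    case 4
    have "b \<noteq> - 2 * int L2 + 2 + 2*q" using 4 by presburger
    then show ?thesis using h 4 by (simp add: mem_tbox ab pq cyc_eo)
  qed
qed

lemma box_eq: "box L1 L2 = {- 2 * int L1 .. 2 * int L1 - 1} \<times> {- 2 * int L2 + 2 .. 2 * int L2 + 1}"
  by (auto simp: box_def)

lemma finite_tbox: "finite (translate (box L1 L2) v)"
  by (simp add: translate_def box_eq)

lemma card_tbox: "real (card (translate (box L1 L2) v)) \<le> 4 * vol_box L1 L2"
proof -
  have "card (translate (box L1 L2) v) \<le> card (box L1 L2)"
    unfolding translate_def by (rule card_image_le) (simp add: box_eq)
  also have "card (box L1 L2) = nat (4 * int L1) * nat (4 * int L2)"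
    by (simp add: box_eq card_cartesian_product)
  finally have "card (translate (box L1 L2) v) \<le> 16 * (L1 * L2)" by (simp add: nat_mult_distrib)
  then have "real (card (translate (box L1 L2) v)) \<le> real (16 * (L1 * L2))" by (rule of_nat_mono)
  then show ?thesis by (simp add: vol_box_def)
qed

lemma nonempty_tbox: "L1 \<ge> 1 \<Longrightarrow> L2 \<ge> 1 \<Longrightarrow> (- 2 * int L1 + fst v, - 2 * int L2 + 2 + snd v) \<in> translate (box L1 L2) v"
  by (simp add: mem_tbox)



definition w0 :: "complex \<Rightarrow> complex" where "w0 z = (if z = 0 then 1 else z / of_real (cmod z))"

lemma norm_w0: "cmod (w0 z) = 1"
  by (simp add: w0_def norm_divide)

lemma pow4_diff: fixes e w :: complex assumes "cmod e = 1" "cmod w = 1"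
  shows "cmod (e^4 - w^4) \<le> 4 * cmod (e - w)"
proof -
  have "e^4 - w^4 = (e - w) * (e^3 + e^2*w + e*w^2 + w^3)" by (simp add: algebra_simps power2_eq_square power3_eq_cube power4_eq_xxxx)
  moreover have "cmod (e^3 + e^2*w + e*w^2 + w^3) \<le> 4"
  proof -
    have "cmod (e^3 + e^2*w + e*w^2 + w^3) \<le> cmod (e^3) + cmod (e^2*w) + cmod (e*w^2) + cmod (w^3)"
      using norm_triangle_ineq[of "e^3 + e^2*w + e*w^2" "w^3"] norm_triangle_ineq[of "e^3 + e^2*w" "e*w^2"]
        norm_triangle_ineq[of "e^3" "e^2*w"] by linarith
    also have "\<dots> = 4" using assms by (simp add: norm_mult norm_power)
    finally show ?thesis .
  qed
  ultimately show ?thesis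
    using mult_left_mono[of "cmod (e ^ 3 + e\<^sup>2 * w + e * w\<^sup>2 + w ^ 3)" 4 "cmod (e - w)"]
    by (simp add: norm_mult mult.commute)
qed

lemma e_close_w0: fixes e z :: complex assumes "cmod e = 1"
  shows "cmod (e - w0 z) \<le> 2 * cmod (e - z)"
proof (cases "z = 0")
  case True
  have "cmod (e - 1) \<le> cmod e + 1" by (metis norm_one norm_triangle_ineq4)
  then show ?thesis using True assms by (simp add: w0_def)
next
  case False
  have "cmod (z - w0 z) = \<bar>cmod z - 1\<bar>"
  proof -
    have "z - w0 z = of_real (cmod z - 1) * (z / of_real (cmod z))"
      using False by (simp add: w0_def field_simps)
    moreover have "cmod (of_real (cmod z - 1)) = \<bar>cmod z - 1\<bar>" by (rule norm_of_real)
    ultimately show ?thesis using False by (simp add: norm_mult norm_divide del: of_real_diff)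
  qed
  also have "\<bar>cmod z - 1\<bar> \<le> cmod (e - z)"
    using assms norm_triangle_ineq3[of z e] by (simp add: norm_minus_commute)
  finally have "cmod (z - w0 z) \<le> cmod (e - z)" .
  moreover have "cmod (e - w0 z) \<le> cmod (e - z) + cmod (z - w0 z)"
    using norm_triangle_ineq[of "e - z" "z - w0 z"] by simp
  ultimately show ?thesis by simp
qed

lemma key_geom:
  fixes y q e z :: complex
  assumes y: "cmod y = 1" and q: "cmod q = 1" and eq: "y * q = e^4" and ez: "cmod (e - z) \<le> \<eta>"
  shows "cmod (y - w0 z ^ 4 / q) \<le> 8 * \<eta>"
proof -
  have "cmod e ^ 4 = 1" using y q eq by (metis norm_mult norm_power mult_1_left)
  then have e1: "cmod e = 1" using power_eq_1_iff[of "cmod e" 4] by simp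
  have q0: "q \<noteq> 0" using q by auto
  have "y - w0 z ^ 4 / q = (e^4 - w0 z ^ 4) / q" using eq q0 by (simp add: field_simps)
  then have "cmod (y - w0 z ^ 4 / q) = cmod (e^4 - w0 z ^ 4)" using q by (simp add: norm_divide)
  also have "\<dots> \<le> 4 * cmod (e - w0 z)" by (rule pow4_diff[OF e1 norm_w0])
  also have "\<dots> \<le> 4 * (2 * cmod (e - z))" using e_close_w0[OF e1, of z] by simp
  finally show ?thesis using ez by simp
qed

lemma fourth_root: "\<exists>e::complex. e^4 = c"
proof -
  have p: "x^4 = (x^2)^2" for x :: complex by (simp add: eval_nat_numeral)
  have "(csqrt (csqrt c))^4 = ((csqrt (csqrt c))^2)^2" by (rule p)
  also have "\<dots> = c" by simp
  finally show ?thesis by blast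
qed

lemma infdist_char:
  fixes S :: "complex set"
  assumes "closed S" "S \<noteq> {}"
  shows "infdist z S \<le> \<eta> \<longleftrightarrow> (\<exists>e\<in>S. dist z e \<le> \<eta>)"
proof
  assume h: "infdist z S \<le> \<eta>"
  obtain y where "y \<in> S" "infdist z S = dist z y" using infdist_attains_inf[OF assms, of z] by blast
  then show "\<exists>e\<in>S. dist z e \<le> \<eta>" using h by auto
next
  assume "\<exists>e\<in>S. dist z e \<le> \<eta>"
  then obtain e where "e \<in> S" "dist z e \<le> \<eta>" by blast
  then show "infdist z S \<le> \<eta>" using infdist_le[of e S z] by linarith
qed



lemma PPS: "product_prob_space (\<lambda>_. circle_measure)"
  unfolding product_prob_space_def product_prob_space_axioms_def product_sigma_finite_def
  using prob_circle prob_space_imp_sigma_finite by auto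

definition Kset :: "complex \<Rightarrow> real \<Rightarrow> complex set" where
  "Kset z \<eta> = (\<lambda>e. e^4) ` cball z \<eta>"

lemma Kset_closed: "closed (Kset z \<eta>)"
  unfolding Kset_def
  by (intro compact_imp_closed compact_continuous_image continuous_intros) auto

lemma Kset_borel[measurable]: "Kset z \<eta> \<in> sets borel"
  using Kset_closed by (rule borel_closed)

lemma Pb_meas[measurable]: "(\<lambda>\<omega>. Pb \<omega> \<mu>) \<in> borel_measurable Omega"
  unfolding Pb_def Omega_def by measurable

lemma block_bound:
  fixes \<mu> :: "int \<times> int" and z :: complex and \<eta> :: real
  assumes eta: "0 \<le> \<eta>"
  shows "emeasure Omega {\<omega> \<in> space Omega. Pb \<omega> \<mu> \<in> Kset z \<eta>} \<le> ennreal (16 * \<eta>)"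
proof -
  interpret PP: product_prob_space "\<lambda>_. circle_measure" "UNIV :: (int \<times> int) set"
    by (rule PPS)
  let ?M = "\<lambda>_::int\<times>int. circle_measure"
  let ?K = "Kset z \<eta>"
  define c1 c2 c3 where "c1 = cyc \<mu>" "c2 = cyc (cyc \<mu>)" "c3 = cyc3 \<mu>"
  define I0 where "I0 = {c1, c2, c3}"
  define I where "I = insert \<mu> I0"
  have nI0: "\<mu> \<notin> I0" using cyc_neq[of \<mu>] by (auto simp: I0_def c1_c2_c3_def)
  have fI0: "finite I0" "finite I" by (simp_all add: I0_def I_def)
  define X where "X = {x \<in> space (PiM I ?M). (\<forall>i\<in>I. cmod (x i) = 1) \<and> x \<mu> * x c1 * x c2 * x c3 \<in> ?K}"
  have cin: "c1 \<in> I" "c2 \<in> I" "c3 \<in> I" "\<mu> \<in> I" by (simp_all add: I_def I0_def)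
  have Xm: "X \<in> sets (PiM I ?M)"
    unfolding X_def using cin fI0 by measurable
  define E where "E = {\<omega> \<in> space Omega. Pb \<omega> \<mu> \<in> ?K}"
  have AE1: "AE \<omega> in Omega. \<forall>i\<in>I. cmod (\<omega> i) = 1"
    unfolding Omega_def
    by (rule eventually_ball_finite[OF fI0(2)]) (auto intro!: PP.AE_component AE_circle)
  have "emeasure Omega E \<le> emeasure Omega (prod_emb UNIV ?M I X)"
  proof (rule emeasure_mono_AE)
    show "prod_emb UNIV ?M I X \<in> sets Omega" unfolding Omega_def using Xm by simp
    show "AE x in Omega. x \<in> E \<longrightarrow> x \<in> prod_emb UNIV ?M I X"
      using AE1
    proof (rule AE_mp, intro AE_I2 impI)
      fix x assume x: "x \<in> space Omega" "\<forall>i\<in>I. cmod (x i) = 1" "x \<in> E"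
      then show "x \<in> prod_emb UNIV ?M I X"
        unfolding prod_emb_def X_def E_def using cin
        by (auto simp: Omega_def space_PiM Pb_def c1_c2_c3_def)
    qed
  qed
  also have "\<dots> = emeasure (PiM I ?M) X"
    using PP.emeasure_PiM_emb'[of I X] fI0 Xm by (simp add: Omega_def)
  also have "\<dots> = (\<integral>\<^sup>+ x. indicator X x \<partial>PiM (insert \<mu> I0) ?M)"
    using Xm by (simp add: I_def)
  also have "\<dots> = (\<integral>\<^sup>+ x. (\<integral>\<^sup>+ y. indicator X (x(\<mu> := y)) \<partial>circle_measure) \<partial>PiM I0 ?M)"
    using Xm fI0 nI0 by (intro PP.product_nn_integral_insert) (auto simp: I_def)
  also have "\<dots> \<le> (\<integral>\<^sup>+ x. ennreal (16 * \<eta>) \<partial>PiM I0 ?M)"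
  proof (rule nn_integral_mono)
    fix x assume xs: "x \<in> space (PiM I0 ?M)"
    show "(\<integral>\<^sup>+ y. indicator X (x(\<mu> := y)) \<partial>circle_measure) \<le> ennreal (16 * \<eta>)"
    proof (cases "\<forall>i\<in>I0. cmod (x i) = 1")
      case True
      define q where "q = x c1 * x c2 * x c3"
      have q1: "cmod q = 1" using True by (simp add: q_def norm_mult I0_def)
      define w where "w = w0 z ^ 4 / q"
      have "(\<integral>\<^sup>+ y. indicator X (x(\<mu> := y)) \<partial>circle_measure) \<le> (\<integral>\<^sup>+ y. indicator (cball w (8*\<eta>)) y \<partial>circle_measure)"
      proof (rule nn_integral_mono)
        fix y
        show "indicator X (x(\<mu> := y)) \<le> (indicator (cball w (8*\<eta>)) y :: ennreal)"
        proof (cases "x(\<mu> := y) \<in> X")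
          case True
          have ne: "c1 \<noteq> \<mu>" "c2 \<noteq> \<mu>" "c3 \<noteq> \<mu>" using nI0 by (auto simp: I0_def)
          have y1: "cmod y = 1" and yK: "y * q \<in> ?K"
            using True cin ne by (auto simp: X_def q_def mult.assoc)
          obtain e where e0: "e \<in> cball z \<eta>" "y * q = e^4"
            using yK unfolding Kset_def by blast
          have e: "cmod (e - z) \<le> \<eta>" "y * q = e^4"
            using e0 by (simp_all add: dist_norm norm_minus_commute)
          have "cmod (y - w) \<le> 8 * \<eta>" unfolding w_def by (rule key_geom[OF y1 q1 e(2) e(1)])
          then show ?thesis using True by (simp add: dist_norm norm_minus_commute)
        qed simp
      qed
      also have "\<dots> = emeasure circle_measure (cball w (8*\<eta>))" by simp
      also have "\<dots> \<le> ennreal (2 * (8*\<eta>))"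
        using eta q1 by (intro circle_ball) (simp_all add: w_def norm_divide norm_power norm_w0)
      finally show ?thesis by simp
    next
      case False
      have "indicator X (x(\<mu> := y)) = (0::ennreal)" for y
      proof -
        have "x(\<mu> := y) \<notin> X" using False nI0 by (auto simp: X_def I_def)
        then show ?thesis by simp
      qed
      then show ?thesis by simp
    qed
  qed
  also have "\<dots> = ennreal (16 * \<eta>)"
  proof -
    interpret P0: prob_space "PiM I0 ?M" by (rule prob_space_PiM) (rule prob_circle)
    show ?thesis by (simp add: P0.emeasure_space_1)
  qed
  finally show ?thesis unfolding E_def .
qed



lemma spec_closed_nonempty:
  fixes \<Lambda> :: "(int \<times> int) set"
  assumes "finite \<Lambda>" "\<Lambda> \<noteq> {}"
  shows "closed {e. \<exists>\<mu>\<in>\<Lambda>. e ^ 4 = Pb \<omega> \<mu>}" "{e. \<exists>\<mu>\<in>\<Lambda>. e ^ 4 = Pb \<omega> \<mu>} \<noteq> {}"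
proof -
  have "{e. \<exists>\<mu>\<in>\<Lambda>. e ^ 4 = Pb \<omega> \<mu>} = (\<Union>\<mu>\<in>\<Lambda>. {e. e ^ 4 = Pb \<omega> \<mu>})" by auto
  moreover have "closed {e::complex. e ^ 4 = Pb \<omega> \<mu>}" for \<mu>
    by (intro closed_Collect_eq continuous_intros)
  ultimately show "closed {e. \<exists>\<mu>\<in>\<Lambda>. e ^ 4 = Pb \<omega> \<mu>}" using assms(1) by (simp add: closed_UN)
  obtain \<mu> where "\<mu> \<in> \<Lambda>" using assms(2) by blast
  moreover obtain e where "e ^ 4 = Pb \<omega> \<mu>" using fourth_root by blast
  ultimately show "{e. \<exists>\<mu>\<in>\<Lambda>. e ^ 4 = Pb \<omega> \<mu>} \<noteq> {}" by blast
qed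

theorem proposition1:
  shows "\<exists>C > 0. \<exists>\<epsilon>0 > 0. \<forall>L1 L2 :: nat. \<forall>\<eta> :: real.
     L1 \<ge> 1 \<longrightarrow> L2 \<ge> 1 \<longrightarrow> \<eta> > 0 \<longrightarrow> \<eta> * vol_box L1 L2 \<le> \<epsilon>0 \<longrightarrow>
     (\<forall>v :: int \<times> int. even (fst v) \<longrightarrow> even (snd v) \<longrightarrow>
      (\<forall>z :: complex. cmod z \<noteq> 1 \<longrightarrow>
        (let A = {\<omega> \<in> space Omega.
                   infdist z (restricted_spectrum \<omega> (translate (box L1 L2) v)) \<le> \<eta>}
         in A \<in> sets Omega \<and> measure Omega A \<le> C * \<eta> * vol_box L1 L2)))"
proof (intro exI[of _ "64::real"] conjI exI[of _ "1::real"] allI impI, simp, simp)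
  fix L1 L2 :: nat and \<eta> :: real and v :: "int \<times> int" and z :: complex
  assume L: "1 \<le> L1" "1 \<le> L2" and eta: "0 < \<eta>" and ev: "even (fst v)" "even (snd v)"
  define \<Lambda> where "\<Lambda> = translate (box L1 L2) v"
  have fin: "finite \<Lambda>" by (simp add: \<Lambda>_def finite_tbox)
  have cl: "\<forall>\<mu>\<in>\<Lambda>. cyc \<mu> \<in> \<Lambda>" using cyc_tbox[OF ev] by (simp add: \<Lambda>_def)
  have ne: "\<Lambda> \<noteq> {}" using nonempty_tbox[OF L, of v] by (auto simp: \<Lambda>_def)
  define E where "E = (\<lambda>\<mu>. {\<omega> \<in> space Omega. Pb \<omega> \<mu> \<in> Kset z \<eta>})"
  define A where "A = {\<omega> \<in> space Omega. infdist z (restricted_spectrum \<omega> \<Lambda>) \<le> \<eta>}"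
  have AE: "A = (\<Union>\<mu>\<in>\<Lambda>. E \<mu>)"
  proof (intro set_eqI iffI)
    fix \<omega> assume "\<omega> \<in> A"
    then have s: "\<omega> \<in> space Omega" "infdist z {e. \<exists>\<mu>\<in>\<Lambda>. e ^ 4 = Pb \<omega> \<mu>} \<le> \<eta>"
      by (simp_all add: A_def spec_char[OF fin cl])
    then obtain e where "e \<in> {e. \<exists>\<mu>\<in>\<Lambda>. e ^ 4 = Pb \<omega> \<mu>}" "dist z e \<le> \<eta>"
      using infdist_char[OF spec_closed_nonempty[OF fin ne]] by blast
    then obtain \<mu> where "\<mu> \<in> \<Lambda>" "e ^ 4 = Pb \<omega> \<mu>" "e \<in> cball z \<eta>" by auto
    then show "\<omega> \<in> (\<Union>\<mu>\<in>\<Lambda>. E \<mu>)" using s(1) unfolding E_def Kset_def by force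
  next
    fix \<omega> assume "\<omega> \<in> (\<Union>\<mu>\<in>\<Lambda>. E \<mu>)"
    then obtain \<mu> e where m: "\<mu> \<in> \<Lambda>" "\<omega> \<in> space Omega" "e \<in> cball z \<eta>" "Pb \<omega> \<mu> = e ^ 4"
      unfolding E_def Kset_def by blast
    then have "\<exists>e\<in>{e. \<exists>\<mu>\<in>\<Lambda>. e ^ 4 = Pb \<omega> \<mu>}. dist z e \<le> \<eta>"
    proof (intro bexI[of _ e])
      show "e \<in> {e. \<exists>\<mu>\<in>\<Lambda>. e ^ 4 = Pb \<omega> \<mu>}" using m(1) m(4)[symmetric] by blast
      show "dist z e \<le> \<eta>" using m(3) by simp
    qed
    then have "infdist z {e. \<exists>\<mu>\<in>\<Lambda>. e ^ 4 = Pb \<omega> \<mu>} \<le> \<eta>"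
      using infdist_char[OF spec_closed_nonempty[OF fin ne]] by blast
    then show "\<omega> \<in> A" using m by (simp add: A_def spec_char[OF fin cl])
  qed
  have Em: "E \<mu> \<in> sets Omega" for \<mu> unfolding E_def by measurable
  have Am: "A \<in> sets Omega" unfolding AE using fin Em by auto
  interpret PP: product_prob_space "\<lambda>_. circle_measure" "UNIV :: (int \<times> int) set"
    by (rule PPS)
  have PO: "prob_space Omega" unfolding Omega_def by (rule PP.prob_space_axioms)
  have Eb: "measure Omega (E \<mu>) \<le> 16 * \<eta>" for \<mu>
  proof -
    have "emeasure Omega (E \<mu>) \<le> ennreal (16 * \<eta>)" unfolding E_def using eta by (intro block_bound) simp
    moreover have "emeasure Omega (E \<mu>) = ennreal (measure Omega (E \<mu>))"
      unfolding Omega_def by (rule PP.emeasure_eq_measure)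
    ultimately show ?thesis using eta by simp
  qed
  have "measure Omega A \<le> (\<Sum>\<mu>\<in>\<Lambda>. measure Omega (E \<mu>))"
    unfolding AE using fin Em unfolding Omega_def by (intro PP.finite_measure_subadditive_finite) auto
  also have "\<dots> \<le> (\<Sum>\<mu>\<in>\<Lambda>. 16 * \<eta>)" by (intro sum_mono Eb)
  also have "\<dots> = real (card \<Lambda>) * (16 * \<eta>)" by simp
  also have "\<dots> \<le> (4 * vol_box L1 L2) * (16 * \<eta>)"
    using card_tbox[of L1 L2 v] eta by (intro mult_right_mono) (simp_all add: \<Lambda>_def)
  finally have "measure Omega A \<le> 64 * \<eta> * vol_box L1 L2" by (simp add: algebra_simps)
  then show "let A = {\<omega> \<in> space Omega. infdist z (restricted_spectrum \<omega> (translate (box L1 L2) v)) \<le> \<eta>}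
         in A \<in> sets Omega \<and> measure Omega A \<le> 64 * \<eta> * vol_box L1 L2"
    using Am unfolding A_def \<Lambda>_def Let_def by simp
qed

end
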